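(* A $3$-stick unknot diagram $\mathcal{U}$ (three edges of nonzero length) is a non-degenerate triangle if and only if the corresponding folded ribbon unknot $\mathcal{U}_{w,F}$ is a Möbius band.
   Context: A non-degenerate triangle is one whose three vertices are not collinear. For width $w>0$, the folded ribbon $\mathcal{U}_{w,F}$ corresponding to a polygonal diagram $\mathcal{U}$ is a flat strip of width $w$ centred on $\mathcal{U}$, folded at each vertex along a fold line through the vertex perpendicular to the bisector of the angle between the adjacent edges (a piecewise-linear immersion of an annulus or Möbius band into the plane whose only singularities are the fold lines); at a vertex with angle $\pi$ between the adjacent edges there is no fold and the two edges behave as one. $F$ denotes the folding information (which layer is on top at each fold). *)

theory Defs
  imports "HOL-Analysis.Analysis"
begin

text \<open>A closed polygonal diagram with n sticks is a list vs of n vertices;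
  vertex i is vs ! (i mod n), the edges join consecutive vertices cyclically.\<close>

definition vtx :: "complex list \<Rightarrow> nat \<Rightarrow> complex" where
  "vtx vs i = vs ! (i mod length vs)"

definition nonzero_edges :: "complex list \<Rightarrow> bool" where
  "nonzero_edges vs \<longleftrightarrow> (\<forall>i < length vs. vtx vs i \<noteq> vtx vs (Suc i))"

text \<open>Angle pi between the two edges at vertex p (previous vertex a, next vertex c):
  the two edge rays point in opposite directions. Then there is no fold.\<close>

definition straight_at :: "complex \<Rightarrow> complex \<Rightarrow> complex \<Rightarrow> bool" where
  "straight_at a p c \<longleftrightarrow> sgn (a - p) = - sgn (c - p)"

text \<open>Effect of the fold at vertex p on transverse (ribbon-width) vectors:
  reflection in the fold line, i.e. the line through p perpendicular to the
  bisector b of the angle between the adjacent edges; identity if the angle is pi.\<close>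

definition fold_map :: "complex \<Rightarrow> complex \<Rightarrow> complex \<Rightarrow> complex \<Rightarrow> complex" where
  "fold_map a p c x =
     (if straight_at a p c then x
      else (let b = sgn (a - p) + sgn (c - p)
            in x - (2 * (x \<bullet> b) / (b \<bullet> b)) *\<^sub>R b))"

text \<open>Transport of the transverse direction of the ribbon once around the diagram,
  starting on edge 0 (from vertex 0 to vertex 1) and passing the folds at
  vertices 1, 2, ..., n (= vertex 0).\<close>

definition ribbon_transport :: "complex list \<Rightarrow> complex \<Rightarrow> complex" where
  "ribbon_transport vs x =
     foldl (\<lambda>y i. fold_map (vtx vs (i - 1)) (vtx vs i) (vtx vs (Suc i)) y) x
           [1..<Suc (length vs)]"

text \<open>The folded ribbon is the strip [0,L] x [-w/2,w/2] (L = perimeter) mapped along the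
  diagram, with its two ends glued. Following the unit normal of edge 0 once around,
  it returns to plus or minus itself; the ribbon is a Moebius band iff it returns
  reversed (ends glued by t to -t), and an annulus otherwise. This is independent of
  the width w and of the folding information F.\<close>

definition folded_ribbon_is_moebius :: "complex list \<Rightarrow> bool" where
  "folded_ribbon_is_moebius vs \<longleftrightarrow>
     (let n0 = \<i> * sgn (vtx vs 1 - vtx vs 0)
      in ribbon_transport vs n0 = - n0)"

end

theory Submission
  imports Defs
begin

lemma refl_formula:
  fixes z b :: complex
  assumes "b \<noteq> 0"
  shows "z - (2 * (z \<bullet> b) / (b \<bullet> b)) *\<^sub>R b = - cnj z * b / cnj b"
proof -
  have cb: "cnj b \<noteq> 0" using assms by simp
  have i1: "complex_of_real (2 * (z \<bullet> b)) = z * cnj b + cnj z * b"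
    by (simp add: complex_eq_iff inner_complex_def algebra_simps)
  have i2: "complex_of_real (b \<bullet> b) = b * cnj b"
    by (simp add: complex_eq_iff inner_complex_def power2_eq_square)
  have "(2 * (z \<bullet> b) / (b \<bullet> b)) *\<^sub>R b
      = complex_of_real (2 * (z \<bullet> b)) / complex_of_real (b \<bullet> b) * b"
    by (simp add: scaleR_conv_of_real)
  also have "\<dots> = (z * cnj b + cnj z * b) / (b * cnj b) * b" by (simp only: i1 i2)
  also have "\<dots> = (z * cnj b) / (b * cnj b) * b + (cnj z * b) / (b * cnj b) * b"
    by (simp add: add_divide_distrib distrib_right)
  also have "(z * cnj b) / (b * cnj b) * b = z" using assms cb by simp
  also have "(cnj z * b) / (b * cnj b) * b = cnj z * b / cnj b" using assms cb by simp
  finally show ?thesis by simp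
qed

lemma fold_scale:
  "fold_map a p c (s *\<^sub>R x) = s *\<^sub>R fold_map a p c x"
proof -
  have "(s *\<^sub>R x) - (2 * ((s *\<^sub>R x) \<bullet> b) / (b \<bullet> b)) *\<^sub>R b
     = s *\<^sub>R (x - (2 * (x \<bullet> b) / (b \<bullet> b)) *\<^sub>R b)" for b
    by (simp add: scaleR_diff_right inner_scaleR_left)
  then show ?thesis unfolding fold_map_def Let_def by simp
qed

lemma unit_cnj:
  fixes u :: complex assumes "cmod u = 1" shows "cnj u = 1 / u"
proof -
  have "u * cnj u = 1" using assms complex_norm_square[of u] by simp
  moreover have "u \<noteq> 0" using assms by auto
  ultimately show ?thesis by (simp add: eq_divide_eq mult.commute)
qed

lemma fold_step:
  fixes a p c :: complex
  assumes "a \<noteq> p" "c \<noteq> p"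
  shows "fold_map a p c (s *\<^sub>R (\<i> * sgn (p - a))) =
    (if straight_at a p c then s else - s) *\<^sub>R (\<i> * sgn (c - p))"
proof (cases "straight_at a p c")
  case True
  then have "sgn (p - a) = sgn (c - p)"
    unfolding straight_at_def by (metis minus_diff_eq sgn_minus)
  moreover have fy: "fold_map a p c y = y" for y
    unfolding fold_map_def using True by (rule if_P)
  ultimately show ?thesis using True by (simp only: fy if_P)
next
  case False
  define u where "u = sgn (a - p)"
  define v where "v = sgn (c - p)"
  have u0: "u \<noteq> 0" "v \<noteq> 0" using assms by (auto simp: u_def v_def sgn_eq_0_iff)
  have cu: "cnj u = 1 / u" "cnj v = 1 / v" using assms
    by (auto simp: u_def v_def norm_sgn intro!: unit_cnj)
  have b0: "u + v \<noteq> 0"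
  proof
    assume "u + v = 0"
    then have "u = - v" by (simp add: eq_neg_iff_add_eq_0)
    then show False using False unfolding straight_at_def u_def v_def by blast
  qed
  have spa: "sgn (p - a) = - u" unfolding u_def by (metis minus_diff_eq sgn_minus)
  have "fold_map a p c (\<i> * sgn (p - a)) = (\<i> * - u) - (2 * ((\<i> * - u) \<bullet> (u + v)) / ((u + v) \<bullet> (u + v))) *\<^sub>R (u + v)"
    using False unfolding fold_map_def Let_def u_def[symmetric] v_def[symmetric] spa
    by simp
  also have "\<dots> = - cnj (\<i> * - u) * (u + v) / cnj (u + v)"
    by (rule refl_formula[OF b0])
  also have "cnj (\<i> * - u) = \<i> / u" by (simp add: cu)
  also have "cnj (u + v) = (u + v) / (u * v)" using u0 by (simp add: cu field_simps)
  also have "- (\<i> / u) * (u + v) / ((u + v) / (u * v)) = - (\<i> / u) * ((u + v) / ((u + v) / (u * v)))"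
    by (simp only: times_divide_eq_right)
  also have "(u + v) / ((u + v) / (u * v)) = u * v" using u0 b0 by simp
  also have "- (\<i> / u) * (u * v) = - \<i> * v" using u0 by simp
  finally have "fold_map a p c (\<i> * sgn (p - a)) = - \<i> * v" .
  then show ?thesis using False by (simp add: fold_scale v_def)
qed

lemma norm_sgn_id: "norm x *\<^sub>R sgn x = (x::'a::real_normed_vector)"
  by (cases "x = 0") (simp_all add: sgn_div_norm)

lemma straight_coll:
  fixes x p y :: complex
  assumes "straight_at x p y"
  shows "collinear {x, p, y}"
proof -
  have e: "sgn (y - p) = - sgn (x - p)" using assms unfolding straight_at_def by simp
  have "x = p + cmod (x - p) *\<^sub>R sgn (x - p)"
    by (simp add: norm_sgn_id)
  moreover have "y = p + (- cmod (y - p)) *\<^sub>R sgn (x - p)"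
  proof -
    have "y = p + cmod (y - p) *\<^sub>R sgn (y - p)"
      by (simp add: norm_sgn_id)
    then show ?thesis using e by simp
  qed
  moreover have "p = p + 0 *\<^sub>R sgn (x - p)" by simp
  ultimately show ?thesis unfolding collinear_alt by blast
qed

lemma sgn_lin:
  fixes d :: complex and r t :: real
  assumes "d \<noteq> 0"
  shows "(sgn (r *\<^sub>R d) = - sgn (t *\<^sub>R d)) \<longleftrightarrow> sgn r = - sgn t"
proof -
  have e: "sgn d \<noteq> 0" using assms by (simp add: sgn_eq_0_iff)
  have "(sgn (r *\<^sub>R d) = - sgn (t *\<^sub>R d)) \<longleftrightarrow> sgn r *\<^sub>R sgn d = (- sgn t) *\<^sub>R sgn d"
    by (simp add: sgn_scaleR)
  also have "\<dots> \<longleftrightarrow> sgn r = - sgn t \<or> sgn d = 0" by (rule scaleR_cancel_right)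
  also have "\<dots> \<longleftrightarrow> sgn r = - sgn t" using e by simp
  finally show ?thesis .
qed

lemma coll_one_straight:
  fixes a b c :: complex
  assumes "a \<noteq> b" "b \<noteq> c" "c \<noteq> a" "collinear {a, b, c}"
  shows "(straight_at a b c \<and> \<not> straight_at b c a \<and> \<not> straight_at c a b) \<or>
         (\<not> straight_at a b c \<and> straight_at b c a \<and> \<not> straight_at c a b) \<or>
         (\<not> straight_at a b c \<and> \<not> straight_at b c a \<and> straight_at c a b)"
proof -
  have "collinear {a, c, b}" using assms(4) by (simp add: insert_commute)
  then obtain u where cu: "c = u *\<^sub>R a + (1 - u) *\<^sub>R b"
    using assms(1) unfolding collinear_3_expand by blast
  define d where "d = a - b"
  have d0: "d \<noteq> 0" using assms(1) by (simp add: d_def)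
  have e1: "a - b = 1 *\<^sub>R d" "c - b = u *\<^sub>R d" "b - c = (- u) *\<^sub>R d"
    "a - c = (1 - u) *\<^sub>R d" "c - a = (u - 1) *\<^sub>R d" "b - a = (- 1) *\<^sub>R d"
    unfolding d_def cu by (simp_all add: algebra_simps)
  have u0: "u \<noteq> 0" using assms(2) cu by auto
  have u1: "u \<noteq> 1" using assms(3) cu by auto
  have s1: "straight_at a b c \<longleftrightarrow> sgn (1::real) = - sgn u"
    unfolding straight_at_def e1 using d0 by (rule sgn_lin)
  have s2: "straight_at b c a \<longleftrightarrow> sgn (- u) = - sgn (1 - u)"
    unfolding straight_at_def e1 using d0 by (rule sgn_lin)
  have s3: "straight_at c a b \<longleftrightarrow> sgn (u - 1) = - sgn (- 1 :: real)"
    unfolding straight_at_def e1 using d0 by (rule sgn_lin)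
  show ?thesis unfolding s1 s2 s3 using u0 u1
    by (auto simp: sgn_if split: if_splits)
qed

theorem lemma5p1:
  fixes a b c :: complex
  assumes "nonzero_edges [a, b, c]"
  shows "\<not> collinear {a, b, c} \<longleftrightarrow> folded_ribbon_is_moebius [a, b, c]"
proof -
  have h: "\<forall>i<3. vtx [a, b, c] i \<noteq> vtx [a, b, c] (Suc i)"
    using assms unfolding nonzero_edges_def by simp
  have ab: "a \<noteq> b" using h[rule_format, of 0] by (simp add: vtx_def)
  have bc: "b \<noteq> c" using h[rule_format, of 1] by (simp add: vtx_def)
  have ca: "c \<noteq> a" using h[rule_format, of 2] by (simp add: vtx_def)
  have rt: "ribbon_transport [a, b, c] x = fold_map c a b (fold_map b c a (fold_map a b c x))" for x
  proof -
    have l: "[1..<Suc (length [a, b, c])] = [1, 2, 3]" by (simp add: upt_rec)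
    have vv: "vtx [a, b, c] (1 - 1) = a" "vtx [a, b, c] 1 = b" "vtx [a, b, c] (Suc 1) = c"
      "vtx [a, b, c] (2 - 1) = b" "vtx [a, b, c] 2 = c" "vtx [a, b, c] (Suc 2) = a"
      "vtx [a, b, c] (3 - 1) = c" "vtx [a, b, c] 3 = a" "vtx [a, b, c] (Suc 3) = b"
      by (simp_all add: vtx_def)
    show ?thesis unfolding ribbon_transport_def l by (simp only: foldl_Cons foldl_Nil vv)
  qed
  define n0 where "n0 = \<i> * sgn (b - a)"
  have n00: "n0 \<noteq> 0" using ab by (simp add: n0_def sgn_eq_0_iff)
  define s1 where "s1 = (if straight_at a b c then 1 else - 1 :: real)"
  define s2 where "s2 = (if straight_at b c a then s1 else - s1)"
  define s3 where "s3 = (if straight_at c a b then s2 else - s2)"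
  have "fold_map a b c (1 *\<^sub>R (\<i> * sgn (b - a))) = s1 *\<^sub>R (\<i> * sgn (c - b))"
    unfolding s1_def by (rule fold_step) (use ab bc in auto)
  moreover have "fold_map b c a (s1 *\<^sub>R (\<i> * sgn (c - b))) = s2 *\<^sub>R (\<i> * sgn (a - c))"
    unfolding s2_def by (rule fold_step) (use ca bc in auto)
  moreover have "fold_map c a b (s2 *\<^sub>R (\<i> * sgn (a - c))) = s3 *\<^sub>R (\<i> * sgn (b - a))"
    unfolding s3_def by (rule fold_step) (use ca ab in auto)
  ultimately have tr: "ribbon_transport [a, b, c] n0 = s3 *\<^sub>R n0"
    unfolding rt n0_def by simp
  have v1: "vtx [a, b, c] 1 = b" "vtx [a, b, c] 0 = a" by (simp_all add: vtx_def)
  have moeb: "folded_ribbon_is_moebius [a, b, c] \<longleftrightarrow> s3 = - 1"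
  proof -
    have "folded_ribbon_is_moebius [a, b, c] \<longleftrightarrow> s3 *\<^sub>R n0 = (- 1) *\<^sub>R n0"
      unfolding folded_ribbon_is_moebius_def Let_def v1 n0_def[symmetric] tr by simp
    also have "\<dots> \<longleftrightarrow> s3 = - 1 \<or> n0 = 0" by (rule scaleR_cancel_right)
    also have "\<dots> \<longleftrightarrow> s3 = - 1" using n00 by simp
    finally show ?thesis .
  qed
  show ?thesis
  proof (cases "collinear {a, b, c}")
    case True
    from coll_one_straight[OF ab bc ca True] have "s3 = 1"
      unfolding s3_def s2_def s1_def by auto
    then show ?thesis using True moeb by simp
  next
    case False
    have "\<not> straight_at a b c" using False straight_coll[of a b c] by blast
    moreover have "\<not> straight_at b c a" using False straight_coll[of b c a]
      by (auto simp: insert_commute)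
    moreover have "\<not> straight_at c a b" using False straight_coll[of c a b]
      by (auto simp: insert_commute)
    ultimately have "s3 = - 1" unfolding s3_def s2_def s1_def by simp
    then show ?thesis using False moeb by simp
  qed
qed

end
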